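(* Let $\mathcal{G}^s$ be an SCG and let $\pi^f$ be a directed graph on $\mathcal{V}^f$ such that $\pi^f$ is acyclic, every edge $A_s\to B_{s'}$ of $\pi^f$ satisfies $s\le s'$, and the reduction of $\pi^f$ is a subgraph of $\mathcal{G}^s$. Then there exists an FTCG $\mathcal{G}^f\in\mathcal{C}(\mathcal{G}^s)$ which contains $\pi^f$ (as a subgraph).
   Context: Let $\mathcal{V}$ be a finite set of time series, $\mathcal{V}^f=\{X_s: X\in\mathcal{V},s\in\mathbb{Z}\}$. An FTCG is a DAG on $\mathcal{V}^f$ whose edges $X_s\to Z_{s'}$ satisfy $s\le s'$. The reduction of a directed graph $\mathcal{H}$ on $\mathcal{V}^f$ is the directed graph on $\mathcal{V}$ with an edge $X\to Z$ iff $\mathcal{H}$ has an edge $X_{s-\gamma}\to Z_s$ for some $s$ and $\gamma\ge0$. The SCG reduced from an FTCG is its reduction; an SCG is a graph reduced from some FTCG, and $\mathcal{C}(\mathcal{G}^s)$ is the class of FTCGs whose reduction equals $\mathcal{G}^s$. *)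

theory Defs
  imports Main
begin

(* A time-indexed vertex X_s is the pair (X, s) with s :: int.
   A directed graph on V^f is a set of edges H with endpoints in V \<times> UNIV. *)

definition graph_on_Vf :: "'v set \<Rightarrow> (('v \<times> int) \<times> ('v \<times> int)) set \<Rightarrow> bool" where
  "graph_on_Vf V H \<longleftrightarrow> H \<subseteq> (V \<times> UNIV) \<times> (V \<times> UNIV)"

definition time_respecting :: "(('v \<times> int) \<times> ('v \<times> int)) set \<Rightarrow> bool" where
  "time_respecting H \<longleftrightarrow> (\<forall>X s Z s'. ((X, s), (Z, s')) \<in> H \<longrightarrow> s \<le> s')"

definition is_FTCG :: "'v set \<Rightarrow> (('v \<times> int) \<times> ('v \<times> int)) set \<Rightarrow> bool" where
  "is_FTCG V H \<longleftrightarrow> graph_on_Vf V H \<and> acyclic H \<and> time_respecting H"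

definition reduction :: "(('v \<times> int) \<times> ('v \<times> int)) set \<Rightarrow> ('v \<times> 'v) set" where
  "reduction H = {(X, Z). \<exists>s \<gamma>. \<gamma> \<ge> 0 \<and> ((X, s - \<gamma>), (Z, s)) \<in> H}"

definition is_SCG :: "'v set \<Rightarrow> ('v \<times> 'v) set \<Rightarrow> bool" where
  "is_SCG V Gs \<longleftrightarrow> (\<exists>G. is_FTCG V G \<and> reduction G = Gs)"

definition FTCG_class :: "'v set \<Rightarrow> ('v \<times> 'v) set \<Rightarrow> (('v \<times> int) \<times> ('v \<times> int)) set set" where
  "FTCG_class V Gs = {G. is_FTCG V G \<and> reduction G = Gs}"

end

theory Submission
  imports Defs
begin

lemma edge:
  assumes tr: "time_respecting \<pi>"
    and "(y, z) \<in> \<pi> \<union> {((X, 0::int), (Z, 1)) | X Z. (X, Z) \<in> Gs}"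
  shows "snd y < snd z \<or> (snd y = snd z \<and> (y, z) \<in> \<pi>)"
proof (cases "(y, z) \<in> \<pi>")
  case True
  obtain A s B t where yz: "y = (A, s)" "z = (B, t)" by (cases y, cases z) auto
  have "s \<le> t" using tr True unfolding time_respecting_def yz by blast
  then show ?thesis using True yz by auto
next
  case False
  then show ?thesis using assms(2) by auto
qed

lemma key:
  assumes tr: "time_respecting \<pi>"
    and "(a, b) \<in> (\<pi> \<union> {((X, 0::int), (Z, 1)) | X Z. (X, Z) \<in> Gs})\<^sup>+"
  shows "snd a < snd b \<or> (snd a = snd b \<and> (a, b) \<in> \<pi>\<^sup>+)"
  using assms(2)
proof (induction rule: trancl_induct)
  case (base y)
  then show ?case using edge[OF tr base] by auto
next
  case (step y z)
  have yz: "snd y < snd z \<or> (snd y = snd z \<and> (y, z) \<in> \<pi>)"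
    using edge[OF tr step(2)] .
  show ?case
  proof (cases "snd a < snd y")
    case True
    then show ?thesis using yz by auto
  next
    case False
    then have "snd a = snd y" "(a, y) \<in> \<pi>\<^sup>+" using step(3) by auto
    then show ?thesis using yz by auto
  qed
qed

theorem lemma5:
  fixes V :: "'v set" and Gs :: "('v \<times> 'v) set"
    and \<pi> :: "(('v \<times> int) \<times> ('v \<times> int)) set"
  assumes "finite V"
    and "is_SCG V Gs"
    and "graph_on_Vf V \<pi>"
    and "acyclic \<pi>"
    and "time_respecting \<pi>"
    and "reduction \<pi> \<subseteq> Gs"
  shows "\<exists>G \<in> FTCG_class V Gs. \<pi> \<subseteq> G"
proof -
  define E where "E = {((X, 0::int), (Z, 1::int)) | X Z. (X, Z) \<in> Gs}"
  obtain G0 where G0: "is_FTCG V G0" "reduction G0 = Gs" using assms(2) unfolding is_SCG_def by blast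
  have GsV: "Gs \<subseteq> V \<times> V" using G0 unfolding is_FTCG_def graph_on_Vf_def reduction_def by blast
  have g: "graph_on_Vf V (\<pi> \<union> E)" using assms(3) GsV unfolding graph_on_Vf_def E_def by blast
  have t: "time_respecting (\<pi> \<union> E)" using assms(5) unfolding time_respecting_def E_def by auto
  have a: "acyclic (\<pi> \<union> E)"
    unfolding acyclic_def
  proof
    fix x
    show "(x, x) \<notin> (\<pi> \<union> E)\<^sup>+"
    proof
      assume "(x, x) \<in> (\<pi> \<union> E)\<^sup>+"
      then have "(x, x) \<in> \<pi>\<^sup>+" using key[OF assms(5), of x x Gs] unfolding E_def by auto
      then show False using assms(4) unfolding acyclic_def by blast
    qed
  qed
  have rE: "reduction E = Gs"
  proof
    show "reduction E \<subseteq> Gs" unfolding reduction_def E_def by auto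
    show "Gs \<subseteq> reduction E"
    proof
      fix p assume "p \<in> Gs"
      then obtain X Z where p: "p = (X, Z)" "(X, Z) \<in> Gs" by (cases p) auto
      then have "((X, 1 - 1), (Z, 1)) \<in> E" unfolding E_def by auto
      then show "p \<in> reduction E" unfolding reduction_def p(1)
        by (smt (verit) case_prodI mem_Collect_eq)
    qed
  qed
  have "reduction (\<pi> \<union> E) = reduction \<pi> \<union> reduction E" unfolding reduction_def by auto
  then have r: "reduction (\<pi> \<union> E) = Gs" using rE assms(6) by auto
  show ?thesis using g t a r unfolding FTCG_class_def is_FTCG_def by blast
qed

end
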